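(* Fix a sequence of matchings, two rounds $t_1 < t_2$, and the load vector $x^{(t_1)}$ at the end of round $t_1$. For any family of non-negative numbers $g^{(s)}_{u,v}$ ($[u:v]\in \mathbf{M}^{(s)}$, $t_1 +1 \leq s \leq t_2$), let $Z := \sum_{s=t_1+1}^{t_2} \sum_{[u:v] \in \mathbf{M}^{(s)}} g_{u,v}^{(s)} e_{u,v}^{(s)}$. Then $\mathbb{E}[Z]=0$ and for any $\delta > 0$, \[ \Pr\left[ \left| Z - \mathbb{E}[Z] \right| \geq \delta \right] \leq 2 \exp \left(- \frac{ \delta^2}{2 \sum_{s=t_1+1}^{t_2} \sum_{[u:v] \in \mathbf{M}^{(s)}} \left(g^{(s)}_{u,v}\right)^2 } \right). \]
   Context: Discrete protocol with random orientation on a graph $G=(V,E)$ with $n$ nodes and matchings $\mathbf{M}^{(s)}\subseteq E$: $x^{(s)}\in\mathbb{Z}^n$ is the load vector at the end of round $s$. For each $\{u,v\}\in\mathbf{M}^{(s)}$ an independent uniform $\Phi^{(s)}_{u,v}\in\{-1,1\}$ is drawn ($\Phi^{(s)}_{v,u}=-\Phi^{(s)}_{u,v}$); both nodes receive $\lfloor (x^{(s-1)}_u+x^{(s-1)}_v)/2\rfloor$ tokens and the excess token, if the sum is odd, goes to $u$ if $\Phi^{(s)}_{u,v}=1$ and to $v$ otherwise; unmatched nodes keep their load. The rounding error is $e^{(s)}_{u,v}=\frac12\,\mathsf{Odd}(x^{(s-1)}_u+x^{(s-1)}_v)\,\Phi^{(s)}_{u,v}$, where $\mathsf{Odd}(x)=x\bmod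 2$. $[u:v]\in\mathbf{M}^{(s)}$ means $\{u,v\}\in\mathbf{M}^{(s)}$ with $u<v$. The probability is over the orientations. *)

theory Defs
  imports "HOL-Probability.Probability"
begin

text \<open>Nodes are 0..<n. A graph is a set E of 2-element subsets of {0..<n}.
  A matching is represented by its set of ordered pairs (u,v) with u < v,
  i.e. the pairs [u:v].\<close>

definition is_graph :: "nat \<Rightarrow> nat set set \<Rightarrow> bool" where
  "is_graph n E \<longleftrightarrow> (\<forall>e\<in>E. \<exists>u v. e = {u, v} \<and> u \<noteq> v \<and> u < n \<and> v < n)"

definition is_matching :: "nat set set \<Rightarrow> (nat \<times> nat) set \<Rightarrow> bool" where
  "is_matching E M \<longleftrightarrow>
     (\<forall>(u,v)\<in>M. u < v \<and> {u, v} \<in> E) \<and>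
     (\<forall>(u,v)\<in>M. \<forall>(u',v')\<in>M. (u,v) \<noteq> (u',v') \<longrightarrow> {u,v} \<inter> {u',v'} = {})"

definition Odd :: "int \<Rightarrow> int" where
  "Odd x = x mod 2"

text \<open>One round of the discrete protocol with random orientation.
  phi u v (for [u:v] in M) is the orientation in {-1,1}; the excess token goes to
  u if phi u v = 1 and to v otherwise.\<close>
definition balance_step :: "(nat \<Rightarrow> int) \<Rightarrow> (nat \<times> nat) set \<Rightarrow> (nat \<Rightarrow> nat \<Rightarrow> int) \<Rightarrow> nat \<Rightarrow> int" where
  "balance_step x M phi w =
     (if \<exists>v. (w, v) \<in> M then
        (let v = (THE v. (w, v) \<in> M) in
           (x w + x v) div 2 + (if Odd (x w + x v) = 1 \<and> phi w v = 1 then 1 else 0))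
      else if \<exists>u. (u, w) \<in> M then
        (let u = (THE u. (u, w) \<in> M) in
           (x u + x w) div 2 + (if Odd (x u + x w) = 1 \<and> phi u w \<noteq> 1 then 1 else 0))
      else x w)"

text \<open>Load after round t1 + k, starting from x0 = x^(t1) at the end of round t1,
  with orientations Phi (s, u, v) for round s.\<close>
primrec load_after :: "(nat \<Rightarrow> (nat \<times> nat) set) \<Rightarrow> nat \<Rightarrow> (nat \<Rightarrow> int)
    \<Rightarrow> (nat \<times> nat \<times> nat \<Rightarrow> int) \<Rightarrow> nat \<Rightarrow> nat \<Rightarrow> int" where
  "load_after M t1 x0 Phi 0 = x0"
| "load_after M t1 x0 Phi (Suc k) =
     balance_step (load_after M t1 x0 Phi k) (M (t1 + Suc k))
       (\<lambda>u v. Phi (t1 + Suc k, u, v))"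

definition load :: "(nat \<Rightarrow> (nat \<times> nat) set) \<Rightarrow> nat \<Rightarrow> (nat \<Rightarrow> int)
    \<Rightarrow> (nat \<times> nat \<times> nat \<Rightarrow> int) \<Rightarrow> nat \<Rightarrow> nat \<Rightarrow> int" where
  "load M t1 x0 Phi s = load_after M t1 x0 Phi (s - t1)"

definition rerr :: "(nat \<Rightarrow> (nat \<times> nat) set) \<Rightarrow> nat \<Rightarrow> (nat \<Rightarrow> int)
    \<Rightarrow> (nat \<times> nat \<times> nat \<Rightarrow> int) \<Rightarrow> nat \<Rightarrow> nat \<Rightarrow> nat \<Rightarrow> real" where
  "rerr M t1 x0 Phi s u v =
     1/2 * real_of_int (Odd (load M t1 x0 Phi (s - 1) u + load M t1 x0 Phi (s - 1) v))
         * real_of_int (Phi (s, u, v))"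

definition orient_index :: "(nat \<Rightarrow> (nat \<times> nat) set) \<Rightarrow> nat \<Rightarrow> nat \<Rightarrow> (nat \<times> nat \<times> nat) set" where
  "orient_index M t1 t2 = {(s, u, v). t1 + 1 \<le> s \<and> s \<le> t2 \<and> (u, v) \<in> M s}"

text \<open>Sample space: all orientation assignments; uniform distribution on it = independent
  uniform orientations in {-1,1}.\<close>
definition orient_space :: "(nat \<Rightarrow> (nat \<times> nat) set) \<Rightarrow> nat \<Rightarrow> nat \<Rightarrow> (nat \<times> nat \<times> nat \<Rightarrow> int) set" where
  "orient_space M t1 t2 =
     {Phi. (\<forall>i\<in>orient_index M t1 t2. Phi i \<in> {-1, 1}) \<and> (\<forall>i. i \<notin> orient_index M t1 t2 \<longrightarrow> Phi i = 0)}"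

definition orient_pmf :: "(nat \<Rightarrow> (nat \<times> nat) set) \<Rightarrow> nat \<Rightarrow> nat \<Rightarrow> (nat \<times> nat \<times> nat \<Rightarrow> int) pmf" where
  "orient_pmf M t1 t2 = pmf_of_set (orient_space M t1 t2)"

end

theory Submission
  imports Defs
begin

lemma cosh_bound:
  fixes c :: real
  shows "exp c + exp (-c) \<le> 2 * exp (c^2/2)"
proof -
  have main: "exp c + exp (-c) \<le> 2 * exp (c^2/2)" if "c \<ge> 0" for c :: real
  proof -
    have "- (2*c) * (1/2) + ln (1 + (1/2) * (exp (2*c) - 1)) \<le> (2*c)^2/8"
      using Hoeffdings_lemma_aux[of "2*c" "1/2"] that by simp
    hence "ln ((1 + exp (2*c))/2) \<le> c + c^2/2"
      by (simp add: power2_eq_square field_simps)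
    hence "exp (ln ((1 + exp (2*c))/2)) \<le> exp (c + c^2/2)" by simp
    moreover have "exp (ln ((1 + exp (2*c))/2)) = (1 + exp (2*c))/2"
      by (intro exp_ln) (auto intro: add_pos_pos)
    ultimately have "(1 + exp (2*c))/2 \<le> exp (c + c^2/2)" by simp
    hence "exp (-c) * ((1 + exp (2*c))/2) \<le> exp (-c) * exp (c + c^2/2)"
      by (intro mult_left_mono) auto
    moreover have "exp (-c) * exp (2*c) = exp c" by (simp add: exp_add[symmetric])
    moreover have "exp (-c) * exp (c + c^2/2) = exp (c^2/2)" by (simp add: exp_add[symmetric])
    ultimately show ?thesis by (simp add: field_simps)
  qed
  show ?thesis
  proof (cases "c \<ge> 0")
    case True then show ?thesis by (rule main)
  next
    case False
    then show ?thesis using main[of "-c"] by simp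
  qed
qed

definition sspace :: "'a set \<Rightarrow> ('a \<Rightarrow> int) set" where
  "sspace I = {P. (\<forall>i\<in>I. P i \<in> {-1, 1}) \<and> (\<forall>i. i \<notin> I \<longrightarrow> P i = 0)}"

lemma sspace_empty: "sspace {} = {\<lambda>_. 0}"
  by (auto simp: sspace_def)

lemma sspace_insert:
  assumes "i \<notin> I"
  shows "sspace (insert i I) = (\<lambda>(P,\<sigma>). P(i:=\<sigma>)) ` (sspace I \<times> {-1,1})"
proof (intro equalityI subsetI)
  fix Q assume Q: "Q \<in> sspace (insert i I)"
  have "Q(i:=0) \<in> sspace I" using Q assms by (auto simp: sspace_def)
  moreover have "Q i \<in> {-1,1}" using Q by (auto simp: sspace_def)
  moreover have "Q = (Q(i:=0))(i:= Q i)" by simp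
  ultimately show "Q \<in> (\<lambda>(P,\<sigma>). P(i:=\<sigma>)) ` (sspace I \<times> {-1,1})"
    by (metis (no_types, lifting) SigmaI case_prod_conv image_eqI)
next
  fix Q assume "Q \<in> (\<lambda>(P,\<sigma>). P(i:=\<sigma>)) ` (sspace I \<times> {-1,1})"
  then obtain P \<sigma> where "P \<in> sspace I" "\<sigma> \<in> {-1,1}" "Q = P(i:=\<sigma>)" by auto
  then have P1: "\<forall>k\<in>I. P k \<in> {-1,1}" and P2: "\<forall>k. k \<notin> I \<longrightarrow> P k = 0"
    and s: "\<sigma> \<in> {-1,1}" and Q: "Q = P(i:=\<sigma>)" unfolding sspace_def by blast+
  have "\<forall>k\<in>insert i I. Q k \<in> {-1,1}"
  proof
    fix k assume "k \<in> insert i I"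
    then show "Q k \<in> {-1,1}" using P1 s unfolding Q by (cases "k = i") auto
  qed
  moreover have "\<forall>k. k \<notin> insert i I \<longrightarrow> Q k = 0" using P2 unfolding Q by simp
  ultimately show "Q \<in> sspace (insert i I)" unfolding sspace_def by blast
qed

lemma sspace_inj:
  assumes "i \<notin> I"
  shows "inj_on (\<lambda>(P,\<sigma>). P(i:=\<sigma>)) (sspace I \<times> {-1,1})"
proof (rule inj_onI, clarify)
  fix P \<sigma> P' \<sigma>' assume A: "P \<in> sspace I" "P' \<in> sspace I" "P(i := \<sigma>) = P'(i := \<sigma>')"
  have "\<sigma> = \<sigma>'" using fun_cong[OF A(3), of i] by simp
  moreover have "P = P'"
  proof
    fix x show "P x = P' x"
      using fun_cong[OF A(3), of x] A(1,2) assms by (cases "x = i") (auto simp: sspace_def)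
  qed
  ultimately show "P = P' \<and> \<sigma> = \<sigma>'" by simp
qed

lemma sspace_finite_card:
  assumes "finite I"
  shows "finite (sspace I) \<and> card (sspace I) = 2 ^ card I"
  using assms
proof (induction I rule: finite_induct)
  case empty then show ?case by (simp add: sspace_empty)
next
  case (insert i I)
  have "card (sspace (insert i I)) = card (sspace I \<times> {-1,1::int})"
    unfolding sspace_insert[OF insert(2)] by (rule card_image[OF sspace_inj[OF insert(2)]])
  then show ?case using insert by (simp add: sspace_insert)
qed

lemma sspace_nonempty: "sspace I \<noteq> {}"
proof -
  have "(\<lambda>i. if i \<in> I then 1 else 0) \<in> sspace I" by (auto simp: sspace_def)
  then show ?thesis by blast
qed

lemma mgf_bound:
  fixes c :: "'a \<Rightarrow> ('a \<Rightarrow> int) \<Rightarrow> real" and r :: "'a \<Rightarrow> nat"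
  assumes "finite I"
    and dep: "\<And>j P P'. j \<in> I \<Longrightarrow> (\<And>k. r k < r j \<Longrightarrow> P k = P' k) \<Longrightarrow> c j P = c j P'"
    and bnd: "\<And>j P. j \<in> I \<Longrightarrow> \<bar>c j P\<bar> \<le> b j"
  shows "(\<Sum>P\<in>sspace I. exp (\<Sum>j\<in>I. c j P * P j)) \<le> 2 ^ card I * exp (\<Sum>j\<in>I. (b j)^2/2)"
  using assms
proof (induction I rule: finite_ranking_induct[where f = r])
  case empty then show ?case by (simp add: sspace_empty)
next
  case (insert i I)
  have IH: "(\<Sum>P\<in>sspace I. exp (\<Sum>j\<in>I. c j P * P j)) \<le> 2 ^ card I * exp (\<Sum>j\<in>I. (b j)^2/2)"
  proof (rule insert.IH)
    fix j and P P' :: "'a \<Rightarrow> int" assume "j \<in> I" "\<And>k. r k < r j \<Longrightarrow> P k = P' k"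
    then show "c j P = c j P'" by (intro insert.prems(1)) auto
  next
    fix j P assume "j \<in> I" then show "\<bar>c j P\<bar> \<le> b j" by (intro insert.prems(2)) auto
  qed
  show ?case
  proof (cases "i \<in> I")
    case True
    then have "insert i I = I" by blast
    then show ?thesis using IH by simp
  next
    case False
    have ci: "c i (P(i:=\<sigma>)) = c i P" for P \<sigma>
      by (rule insert.prems(1)) auto
    have cj: "c j (P(i:=\<sigma>)) = c j P" if "j \<in> I" for P \<sigma> j
      using that insert.hyps(2)[OF that] by (intro insert.prems(1)) auto
    have bi: "\<bar>c i P\<bar> \<le> b i" for P using insert.prems(2) by blast
    have F: "exp (\<Sum>j\<in>insert i I. c j (P(i:=\<sigma>)) * (P(i:=\<sigma>)) j)
       = exp (c i P * \<sigma>) * exp (\<Sum>j\<in>I. c j P * P j)" for P \<sigma>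
    proof -
      have "(\<Sum>j\<in>I. c j (P(i:=\<sigma>)) * (P(i:=\<sigma>)) j) = (\<Sum>j\<in>I. c j P * P j)"
        using False cj by (intro sum.cong) auto
      then show ?thesis using insert.hyps(1) False ci by (simp add: exp_add)
    qed
    have "(\<Sum>P\<in>sspace (insert i I). exp (\<Sum>j\<in>insert i I. c j P * P j))
        = (\<Sum>(P,\<sigma>)\<in>sspace I \<times> {-1,1}. exp (\<Sum>j\<in>insert i I. c j (P(i:=\<sigma>)) * (P(i:=\<sigma>)) j))"
      unfolding sspace_insert[OF False]
      by (subst sum.reindex[OF sspace_inj[OF False]]) (simp add: case_prod_unfold)
    also have "\<dots> = (\<Sum>P\<in>sspace I. \<Sum>\<sigma>\<in>{-1,1}. exp (\<Sum>j\<in>insert i I. c j (P(i:=\<sigma>)) * (P(i:=\<sigma>)) j))"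
      by (rule sum.cartesian_product[symmetric])
    also have "\<dots> = (\<Sum>P\<in>sspace I. \<Sum>\<sigma>\<in>{-1,1::int}. exp (c i P * real_of_int \<sigma>) * exp (\<Sum>j\<in>I. c j P * P j))"
      by (simp only: F)
    also have "\<dots> = (\<Sum>P\<in>sspace I. (exp (c i P) + exp (- c i P)) * exp (\<Sum>j\<in>I. c j P * P j))"
      by (simp add: algebra_simps)
    also have "\<dots> \<le> (\<Sum>P\<in>sspace I. (2 * exp ((b i)^2/2)) * exp (\<Sum>j\<in>I. c j P * P j))"
    proof (intro sum_mono mult_right_mono)
      fix P
      have "(c i P)^2 \<le> (b i)^2" using bi[of P]
        by (metis abs_le_square_iff abs_of_nonneg abs_ge_zero order_trans)
      then show "exp (c i P) + exp (- c i P) \<le> 2 * exp ((b i)^2/2)"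
        using cosh_bound[of "c i P"] by (smt (verit) divide_right_mono exp_le_cancel_iff zero_le_numeral)
    qed simp
    also have "\<dots> = (2 * exp ((b i)^2/2)) * (\<Sum>P\<in>sspace I. exp (\<Sum>j\<in>I. c j P * P j))"
      by (simp add: sum_distrib_left)
    also have "\<dots> \<le> (2 * exp ((b i)^2/2)) * (2 ^ card I * exp (\<Sum>j\<in>I. (b j)^2/2))"
      by (intro mult_left_mono IH) simp
    also have "\<dots> = 2 ^ card (insert i I) * exp (\<Sum>j\<in>insert i I. (b j)^2/2)"
      using insert.hyps(1) False by (simp add: exp_add)
    finally show ?thesis .
  qed
qed

lemma mean_zero:
  fixes c :: "'a \<Rightarrow> ('a \<Rightarrow> int) \<Rightarrow> real" and r :: "'a \<Rightarrow> nat"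
  assumes "finite I"
    and dep: "\<And>j P P'. j \<in> I \<Longrightarrow> (\<And>k. r k < r j \<Longrightarrow> P k = P' k) \<Longrightarrow> c j P = c j P'"
  shows "(\<Sum>P\<in>sspace I. \<Sum>j\<in>I. c j P * P j) = 0"
proof -
  have "(\<Sum>P\<in>sspace I. c j P * P j) = 0" if j: "j \<in> I" for j
  proof -
    define fl where "fl = (\<lambda>P::'a \<Rightarrow> int. P(j := - P j))"
    have cfl: "c j (fl P) = c j P" for P unfolding fl_def by (rule dep[OF j]) auto
    have "(\<Sum>P\<in>sspace I. c j P * P j) = (\<Sum>P\<in>sspace I. c j (fl P) * (fl P) j)"
      by (rule sum.reindex_bij_witness[where i = fl and j = fl])
         (auto simp: fl_def sspace_def)
    also have "\<dots> = - (\<Sum>P\<in>sspace I. c j P * P j)"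
      by (simp only: cfl) (simp add: fl_def sum_negf)
    finally show ?thesis by simp
  qed
  then show ?thesis by (subst sum.swap) simp
qed
lemma onesided:
  fixes f :: "'b \<Rightarrow> real"
  assumes fin: "finite S"
    and mgf: "\<And>l. (\<Sum>x\<in>S. exp (l * f x)) \<le> real (card S) * exp (l^2 * G / 2)"
    and d: "\<delta> > 0" and G: "G > 0"
  shows "real (card (S \<inter> {x. \<delta> \<le> f x})) \<le> real (card S) * exp (-(\<delta>^2/(2*G)))"
proof -
  define \<mu> where "\<mu> = \<delta> / G"
  have mu: "\<mu> > 0" using d G by (simp add: \<mu>_def)
  have "real (card (S \<inter> {x. \<delta> \<le> f x})) = (\<Sum>x\<in>S \<inter> {x. \<delta> \<le> f x}. 1)" by simp
  also have "\<dots> \<le> (\<Sum>x\<in>S \<inter> {x. \<delta> \<le> f x}. exp (\<mu> * f x - \<mu> * \<delta>))"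
  proof (rule sum_mono)
    fix x assume "x \<in> S \<inter> {x. \<delta> \<le> f x}"
    then have "0 \<le> \<mu> * f x - \<mu> * \<delta>" using mu
      by (simp add: right_diff_distrib[symmetric])
    then show "1 \<le> exp (\<mu> * f x - \<mu> * \<delta>)" by simp
  qed
  also have "\<dots> \<le> (\<Sum>x\<in>S. exp (\<mu> * f x - \<mu> * \<delta>))"
    by (rule sum_mono2) (use fin in auto)
  also have "\<dots> = exp (- (\<mu> * \<delta>)) * (\<Sum>x\<in>S. exp (\<mu> * f x))"
    by (simp add: sum_distrib_left exp_diff exp_minus field_simps)
  also have "\<dots> \<le> exp (- (\<mu> * \<delta>)) * (real (card S) * exp (\<mu>^2 * G / 2))"
    by (intro mult_left_mono mgf) simp
  also have "\<dots> = real (card S) * (exp (\<mu>^2 * G / 2) * exp (- (\<mu> * \<delta>)))"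
    by (simp add: mult_ac)
  also have "\<dots> = real (card S) * exp (\<mu>^2 * G / 2 - \<mu> * \<delta>)"
    by (subst exp_add[symmetric]) simp
  also have "\<mu>^2 * G / 2 - \<mu> * \<delta> = -(\<delta>^2/(2*G))"
    using G by (simp add: \<mu>_def power2_eq_square field_simps)
  finally show ?thesis .
qed

lemma twosided:
  fixes f :: "'b \<Rightarrow> real"
  assumes fin: "finite S" and ne: "S \<noteq> {}"
    and mgf: "\<And>l. (\<Sum>x\<in>S. exp (l * f x)) \<le> real (card S) * exp (l^2 * G / 2)"
    and d: "\<delta> > 0" and G: "G \<ge> 0"
  shows "real (card (S \<inter> {x. \<delta> \<le> \<bar>f x\<bar>})) / real (card S) \<le> 2 * exp (-(\<delta>^2/(2*G)))"
proof (cases "G = 0")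
  case True
  have "card (S \<inter> {x. \<delta> \<le> \<bar>f x\<bar>}) \<le> card S" by (rule card_mono) (use fin in auto)
  then have "real (card (S \<inter> {x. \<delta> \<le> \<bar>f x\<bar>})) / real (card S) \<le> 1"
    using fin ne by (simp add: card_gt_0_iff)
  then show ?thesis using True by simp
next
  case False
  then have Gp: "G > 0" using G by simp
  have c: "card S > 0" using fin ne by (simp add: card_gt_0_iff)
  have mgf2: "(\<Sum>x\<in>S. exp (l * (- f x))) \<le> real (card S) * exp (l^2 * G / 2)" for l
    using mgf[of "-l"] by simp
  have "S \<inter> {x. \<delta> \<le> \<bar>f x\<bar>} \<subseteq> (S \<inter> {x. \<delta> \<le> f x}) \<union> (S \<inter> {x. \<delta> \<le> - f x})" by auto
  then have "card (S \<inter> {x. \<delta> \<le> \<bar>f x\<bar>}) \<le> card ((S \<inter> {x. \<delta> \<le> f x}) \<union> (S \<inter> {x. \<delta> \<le> - f x}))"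
    by (rule card_mono[rotated]) (use fin in auto)
  also have "\<dots> \<le> card (S \<inter> {x. \<delta> \<le> f x}) + card (S \<inter> {x. \<delta> \<le> - f x})"
    by (rule card_Un_le)
  finally have "real (card (S \<inter> {x. \<delta> \<le> \<bar>f x\<bar>})) \<le>
      real (card (S \<inter> {x. \<delta> \<le> f x})) + real (card (S \<inter> {x. \<delta> \<le> - f x}))" by linarith
  also have "\<dots> \<le> real (card S) * exp (-(\<delta>^2/(2*G))) + real (card S) * exp (-(\<delta>^2/(2*G)))"
    by (intro add_mono onesided[OF fin mgf d Gp] onesided[OF fin mgf2 d Gp, simplified])
  finally show ?thesis using c by (simp add: pos_divide_le_eq mult_ac)
qed

lemma load_after_dep:
  "(\<And>s u v. s \<le> t1 + k \<Longrightarrow> P (s,u,v) = P' (s,u,v)) \<Longrightarrow>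
     load_after M t1 x0 P k = load_after M t1 x0 P' k"
proof (induction k)
  case 0 then show ?case by simp
next
  case (Suc k)
  have "load_after M t1 x0 P k = load_after M t1 x0 P' k" using Suc by simp
  moreover have "(\<lambda>u v. P (t1 + Suc k, u, v)) = (\<lambda>u v. P' (t1 + Suc k, u, v))"
    using Suc.prems by auto
  ultimately show ?case by simp
qed

lemma Odd_range: "0 \<le> Odd x \<and> Odd x \<le> 1"
  unfolding Odd_def by auto

theorem lemma2p12:
  fixes n :: nat and E :: "nat set set" and M :: "nat \<Rightarrow> (nat \<times> nat) set"
    and t1 t2 :: nat and x0 :: "nat \<Rightarrow> int" and g :: "nat \<Rightarrow> nat \<Rightarrow> nat \<Rightarrow> real"
  assumes "is_graph n E"
    and "\<And>s. is_matching E (M s)"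
    and "t1 < t2"
    and "\<And>s u v. t1 + 1 \<le> s \<Longrightarrow> s \<le> t2 \<Longrightarrow> (u, v) \<in> M s \<Longrightarrow> g s u v \<ge> 0"
  defines "Z \<equiv> (\<lambda>Phi. \<Sum>s\<in>{t1+1..t2}. \<Sum>(u,v)\<in>M s. g s u v * rerr M t1 x0 Phi s u v)"
  shows "measure_pmf.expectation (orient_pmf M t1 t2) Z = 0 \<and>
    (\<forall>\<delta>>0. measure_pmf.prob (orient_pmf M t1 t2)
        {Phi. \<bar>Z Phi - measure_pmf.expectation (orient_pmf M t1 t2) Z\<bar> \<ge> \<delta>}
      \<le> 2 * exp (- (\<delta>^2 / (2 * (\<Sum>s\<in>{t1+1..t2}. \<Sum>(u,v)\<in>M s. (g s u v)^2)))))"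
proof -
  define I where "I = orient_index M t1 t2"
  define S where "S = orient_space M t1 t2"
  have S_eq: "S = sspace I" unfolding S_def I_def orient_space_def sspace_def by simp
  have Msub: "M s \<subseteq> {..<n} \<times> {..<n}" for s
  proof
    fix p assume p: "p \<in> M s"
    obtain u v where uv: "p = (u,v)" by (cases p)
    have "{u,v} \<in> E" using assms(2)[of s] p uv unfolding is_matching_def by auto
    then obtain a b where "{u,v} = {a,b}" "a < n" "b < n"
      using assms(1) unfolding is_graph_def by blast
    then have "u < n" "v < n" by (metis doubleton_eq_iff)+
    then show "p \<in> {..<n} \<times> {..<n}" using uv by simp
  qed
  have finM: "finite (M s)" for s by (rule finite_subset[OF Msub]) simp
  have I_Sigma: "I = Sigma {t1+1..t2} M" unfolding I_def orient_index_def by auto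
  have finI: "finite I" unfolding I_Sigma using finM by simp
  have Ssum: "(\<Sum>s\<in>{t1+1..t2}. \<Sum>(u,v)\<in>M s. f s u v) = (\<Sum>(s,u,v)\<in>I. f s u v)" for f :: "nat \<Rightarrow> nat \<Rightarrow> nat \<Rightarrow> real"
    unfolding I_Sigma using finM by (subst sum.Sigma) (auto simp: split_def)
  have finS: "finite S" and cardS: "card S = 2 ^ card I" using sspace_finite_card[OF finI] S_eq by auto
  have neS: "S \<noteq> {}" using sspace_nonempty S_eq by simp
  define c where "c = (\<lambda>(l::real) (j::nat\<times>nat\<times>nat) (P::nat\<times>nat\<times>nat \<Rightarrow> int).
      case j of (s,u,v) \<Rightarrow> l * g s u v * (1/2 * real_of_int (Odd (load M t1 x0 P (s - 1) u + load M t1 x0 P (s - 1) v))))"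
  have Zc: "l * Z P = (\<Sum>j\<in>I. c l j P * P j)" for l P
  proof -
    have "l * Z P = (\<Sum>(s,u,v)\<in>I. l * (g s u v * rerr M t1 x0 P s u v))"
      unfolding Z_def Ssum[symmetric] by (simp add: sum_distrib_left split_def)
    also have "\<dots> = (\<Sum>j\<in>I. c l j P * P j)"
      by (rule sum.cong) (auto simp: c_def rerr_def)
    finally show ?thesis .
  qed
  have dep: "c l j P = c l j P'" if j: "j \<in> I" and agree: "\<And>k. fst k < fst j \<Longrightarrow> P k = P' k" for l j P P'
  proof -
    obtain s u v where juv: "j = (s,u,v)" by (cases j) auto
    have s1: "t1 + 1 \<le> s" using j juv unfolding I_def orient_index_def by auto
    have "load M t1 x0 P (s - 1) = load M t1 x0 P' (s - 1)"
      unfolding load_def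
    proof (rule load_after_dep)
      fix s' u' v' :: nat assume "s' \<le> t1 + (s - 1 - t1)"
      then have "fst (s',u',v') < fst j" using s1 juv by auto
      then show "P (s',u',v') = P' (s',u',v')" by (rule agree)
    qed
    then show ?thesis by (simp add: c_def juv)
  qed
  have bnd: "\<bar>c l j P\<bar> \<le> \<bar>l\<bar> * (case j of (s,u,v) \<Rightarrow> g s u v)" if j: "j \<in> I" for l j P
  proof -
    obtain s u v where juv: "j = (s,u,v)" by (cases j) auto
    have g0: "g s u v \<ge> 0" using j juv assms(4) unfolding I_def orient_index_def by auto
    define odv where "odv = real_of_int (Odd (load M t1 x0 P (s - 1) u + load M t1 x0 P (s - 1) v))"
    have odv: "0 \<le> odv" "odv \<le> 1" unfolding odv_def using Odd_range by (simp_all add: Odd_range)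
    have ceq: "c l j P = l * g s u v * (1/2 * odv)" by (simp add: c_def juv odv_def)
    have "\<bar>c l j P\<bar> = \<bar>l\<bar> * g s u v * (odv / 2)"
      unfolding ceq using g0 odv by (simp add: abs_mult)
    also have "\<dots> \<le> \<bar>l\<bar> * g s u v * 1"
      using g0 odv by (intro mult_left_mono) auto
    finally show ?thesis by (simp add: juv)
  qed
  define G where "G = (\<Sum>s\<in>{t1+1..t2}. \<Sum>(u,v)\<in>M s. (g s u v)^2)"
  have G0: "G \<ge> 0" unfolding G_def by (intro sum_nonneg) (auto simp: split_def)
  have mgf: "(\<Sum>P\<in>S. exp (l * Z P)) \<le> real (card S) * exp (l^2 * G / 2)" for l
  proof -
    have "(\<Sum>P\<in>S. exp (l * Z P)) = (\<Sum>P\<in>sspace I. exp (\<Sum>j\<in>I. c l j P * P j))"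
      by (simp add: S_eq Zc)
    also have "\<dots> \<le> 2 ^ card I * exp (\<Sum>j\<in>I. (\<bar>l\<bar> * (case j of (s,u,v) \<Rightarrow> g s u v))^2/2)"
    proof (rule mgf_bound[where r = fst, OF finI])
      fix j and P P' :: "nat \<times> nat \<times> nat \<Rightarrow> int"
      assume "j \<in> I" "\<And>k. fst k < fst j \<Longrightarrow> P k = P' k"
      then show "c l j P = c l j P'" by (rule dep)
    next
      fix j and P :: "nat \<times> nat \<times> nat \<Rightarrow> int"
      assume "j \<in> I"
      then show "\<bar>c l j P\<bar> \<le> \<bar>l\<bar> * (case j of (s,u,v) \<Rightarrow> g s u v)" by (rule bnd)
    qed
    also have "(\<Sum>j\<in>I. (\<bar>l\<bar> * (case j of (s,u,v) \<Rightarrow> g s u v))^2/2) = l^2 * G / 2"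
    proof -
      have "(\<Sum>j\<in>I. (\<bar>l\<bar> * (case j of (s,u,v) \<Rightarrow> g s u v))^2/2)
          = l^2 / 2 * (\<Sum>(s,u,v)\<in>I. (g s u v)^2)"
        by (simp add: sum_distrib_left split_def power_mult_distrib)
      also have "\<dots> = l^2 * G / 2" unfolding G_def Ssum by simp
      finally show ?thesis .
    qed
    finally show ?thesis by (simp add: cardS)
  qed
  have EZ: "measure_pmf.expectation (orient_pmf M t1 t2) Z = 0"
  proof -
    have "(\<Sum>P\<in>S. Z P) = (\<Sum>P\<in>sspace I. \<Sum>j\<in>I. c 1 j P * P j)"
      using Zc[of 1] by (simp add: S_eq)
    also have "\<dots> = 0"
    proof (rule mean_zero[where r = fst, OF finI])
      fix j and P P' :: "nat \<times> nat \<times> nat \<Rightarrow> int"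
      assume "j \<in> I" "\<And>k. fst k < fst j \<Longrightarrow> P k = P' k"
      then show "c 1 j P = c 1 j P'" by (rule dep)
    qed
    finally show ?thesis
      unfolding orient_pmf_def S_def[symmetric] by (simp add: integral_pmf_of_set[OF neS finS])
  qed
  show ?thesis
  proof (intro conjI allI impI)
    show "measure_pmf.expectation (orient_pmf M t1 t2) Z = 0" by (rule EZ)
  next
    fix \<delta> :: real assume d: "\<delta> > 0"
    have "measure_pmf.prob (orient_pmf M t1 t2) {Phi. \<bar>Z Phi - measure_pmf.expectation (orient_pmf M t1 t2) Z\<bar> \<ge> \<delta>}
        = real (card (S \<inter> {x. \<delta> \<le> \<bar>Z x\<bar>})) / real (card S)"
      using EZ unfolding orient_pmf_def S_def[symmetric] by (simp add: measure_pmf_of_set[OF neS finS])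
    also have "\<dots> \<le> 2 * exp (-(\<delta>^2/(2*G)))"
      by (rule twosided[OF finS neS mgf d G0])
    finally show "measure_pmf.prob (orient_pmf M t1 t2) {Phi. \<bar>Z Phi - measure_pmf.expectation (orient_pmf M t1 t2) Z\<bar> \<ge> \<delta>}
      \<le> 2 * exp (- (\<delta>^2 / (2 * (\<Sum>s\<in>{t1+1..t2}. \<Sum>(u,v)\<in>M s. (g s u v)^2))))"
      unfolding G_def .
  qed
qed

end
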